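(* Let $\mathbf{M}$ be a POMDP, let $k\in\mathbb{N}$, and let $\mathbf{C}=(\mathcal{Q},q_1,\gamma,\delta)$ be a deterministic $k$-FSC for $\mathbf{M}$ with corresponding instantiation $u_{\mathbf{C}}$. Then for every $t\in\mathbb{N}$ (with $t\ge 2$), \[ H^{\mathbf{C}}(S_{t} \mid S^{t-1})= H^{u_{\mathbf{C}}}(S_{\mathbf{M},k,t} \mid S_{\mathbf{M},k, t-1}). \]
   Context: A POMDP is $\mathbf{M}=(\mathcal{S},s_I,\mathcal{A},P,\mathcal{Z},O,R)$ with finite state set $\mathcal{S}$, initial state $s_I$, finite action set $\mathcal{A}$, transition function $P_{s,a,s'}=P(s'|s,a)$, finite observation set $\mathcal{Z}$, observation function $O_{s,z}=O(z|s)$, reward $R:\mathcal{S}\times\mathcal{A}\to\mathbb{R}$. A $k$-finite-state controller ($k$-FSC) is $\mathbf{C}=(\mathcal{Q},q_1,\gamma,\delta)$ with memory states $\mathcal{Q}=\{q_1,\ldots,q_k\}$, initial memory state $q_1$, decision function $\gamma:\mathcal{Q}\times\mathcal{Z}\to\Delta(\mathcal{A})$ and memory transition function $\delta:\mathcal{Q}\times\mathcal{Z}\times\mathcal{A}\to\Delta(\mathcal{Q})$. Under $\mathbf{C}$ the POMDP evolves as: $S_1=s_I$, memory $Q_1=q_1$; at time $t$, $Z_t\sim O(\cdot|S_t)$, $A_t\sim\gamma(\cdot|Q_t,Z_t)$, $S_{t+1}\sim P(\cdot|S_t,A_t)$, $Q_{t+1}\sim\delta(\cdot|Q_t,Z_t,A_t)$.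 $H^{\mathbf{C}}(S_t\mid S^{t-1})$ is the conditional entropy of $S_t$ given $S^{t-1}=(S_1,\ldots,S_{t-1})$ in this process. For $q\in\mathcal{Q}$ let $Succ(q)=\{q'\in\mathcal{Q}:\delta(q'|q,z,a)>0 \text{ for some } z\in\mathcal{Z},a\in\mathcal{A}\}$; $\mathbf{C}$ is a deterministic $k$-FSC if $|Succ(q)|=1$ for all $q\in\mathcal{Q}$. The instantiation $u_{\mathbf{C}}$ determines the Markov chain $\mathbf{D}_{\mathbf{M},k}[u_{\mathbf{C}}]$ with state space $\mathcal{S}\times\mathcal{Q}$, initial state $\langle s_I,q_1\rangle$ and transition probabilities \[ P^{u_{\mathbf{C}}}_{\mathbf{M},k}(\langle s',q'\rangle\mid\langle s,q\rangle)=\sum_{a\in\mathcal{A}}\sum_{z\in\mathcal{Z}} O_{s,z}\,P_{s,a,s'}\,\gamma(a|q,z)\,\delta(q'|q,z,a). \] $(S_{\mathbf{M},k,1},S_{\mathbf{M},k,2},\ldots)$ is the state sequence of this Markov chain, and $H^{u_{\mathbf{C}}}(S_{\mathbf{M},k,t}\mid S_{\mathbf{M},k,t-1})$ is the corresponding conditional entropy (convention $0\log 0=0$). *)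

theory Defs
  imports Complex_Main
begin

record ('s, 'a, 'z) pomdp =
  p_init :: "'s"
  p_trans :: "'s \<Rightarrow> 'a \<Rightarrow> 's \<Rightarrow> real"    (* P(s'|s,a) = p_trans s a s' *)
  p_obs :: "'s \<Rightarrow> 'z \<Rightarrow> real"              (* O(z|s) = p_obs s z *)
  p_reward :: "'s \<Rightarrow> 'a \<Rightarrow> real"

definition is_pomdp :: "('s::finite, 'a::finite, 'z::finite) pomdp \<Rightarrow> bool" where
  "is_pomdp M \<longleftrightarrow>
     (\<forall>s a s'. p_trans M s a s' \<ge> 0) \<and> (\<forall>s a. (\<Sum>s'\<in>UNIV. p_trans M s a s') = 1) \<and>
     (\<forall>s z. p_obs M s z \<ge> 0) \<and> (\<forall>s. (\<Sum>z\<in>UNIV. p_obs M s z) = 1)"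

record ('q, 'a, 'z) fsc =
  c_init :: "'q"
  c_dec :: "'q \<Rightarrow> 'z \<Rightarrow> 'a \<Rightarrow> real"          (* gamma(a|q,z) *)
  c_mem :: "'q \<Rightarrow> 'z \<Rightarrow> 'a \<Rightarrow> 'q \<Rightarrow> real"   (* delta(q'|q,z,a) *)

definition is_fsc :: "('q::finite, 'a::finite, 'z::finite) fsc \<Rightarrow> bool" where
  "is_fsc C \<longleftrightarrow>
     (\<forall>q z a. c_dec C q z a \<ge> 0) \<and> (\<forall>q z. (\<Sum>a\<in>UNIV. c_dec C q z a) = 1) \<and>
     (\<forall>q z a q'. c_mem C q z a q' \<ge> 0) \<and> (\<forall>q z a. (\<Sum>q'\<in>UNIV. c_mem C q z a q') = 1)"

definition Succ :: "('q, 'a, 'z) fsc \<Rightarrow> 'q \<Rightarrow> 'q set" where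
  "Succ C q = {q'. \<exists>z a. c_mem C q z a q' > 0}"

definition deterministic_fsc :: "('q, 'a, 'z) fsc \<Rightarrow> bool" where
  "deterministic_fsc C \<longleftrightarrow> (\<forall>q. card (Succ C q) = 1)"

definition lists_len :: "nat \<Rightarrow> 'x list set" where
  "lists_len n = {xs. length xs = n}"

text \<open>Conditional entropy H(Y|X) of a joint distribution f(x,y) on X \<times> Y,
  with the convention 0 log 0 = 0 (logarithm base 2).\<close>
definition cond_ent :: "('x \<Rightarrow> 'y \<Rightarrow> real) \<Rightarrow> 'x set \<Rightarrow> 'y set \<Rightarrow> real" where
  "cond_ent f X Y = - (\<Sum>x\<in>X. \<Sum>y\<in>Y.
      (if f x y = 0 then 0 else f x y * log 2 (f x y / (\<Sum>y'\<in>Y. f x y'))))"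

text \<open>Probability, in the POMDP process under C, that (S_1,...,S_n) = ss (length ss = n \<ge> 1):
  marginal of the joint law of (S_1..S_n, Q_1..Q_n, Z_1..Z_{n-1}, A_1..A_{n-1}).\<close>
definition state_seq_prob ::
  "('s::finite, 'a::finite, 'z::finite) pomdp \<Rightarrow> ('q::finite, 'a, 'z) fsc \<Rightarrow> nat \<Rightarrow> 's list \<Rightarrow> real" where
  "state_seq_prob M C n ss =
     (\<Sum>qs\<in>lists_len n. \<Sum>zs\<in>lists_len (n - 1). \<Sum>as\<in>lists_len (n - 1).
        (if ss ! 0 = p_init M \<and> qs ! 0 = c_init C then
           (\<Prod>i<n - 1. p_obs M (ss ! i) (zs ! i) * c_dec C (qs ! i) (zs ! i) (as ! i)
                        * p_trans M (ss ! i) (as ! i) (ss ! (i + 1))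
                        * c_mem C (qs ! i) (zs ! i) (as ! i) (qs ! (i + 1)))
         else 0))"

definition H_C :: "('s::finite, 'a::finite, 'z::finite) pomdp \<Rightarrow> ('q::finite, 'a, 'z) fsc \<Rightarrow> nat \<Rightarrow> real" where
  "H_C M C t = cond_ent (\<lambda>ss s. state_seq_prob M C t (ss @ [s])) (lists_len (t - 1)) UNIV"

definition mc_kernel ::
  "('s::finite, 'a::finite, 'z::finite) pomdp \<Rightarrow> ('q::finite, 'a, 'z) fsc \<Rightarrow> 's \<times> 'q \<Rightarrow> 's \<times> 'q \<Rightarrow> real" where
  "mc_kernel M C x y = (case x of (s, q) \<Rightarrow> case y of (s', q') \<Rightarrow>
      (\<Sum>a\<in>UNIV. \<Sum>z\<in>UNIV. p_obs M s z * p_trans M s a s' * c_dec C q z a * c_mem C q z a q'))"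

text \<open>mc_dist M C n = distribution of the chain state at time n+1 (time 1 = initial state).\<close>
fun mc_dist ::
  "('s::finite, 'a::finite, 'z::finite) pomdp \<Rightarrow> ('q::finite, 'a, 'z) fsc \<Rightarrow> nat \<Rightarrow> 's \<times> 'q \<Rightarrow> real" where
  "mc_dist M C 0 x = (if x = (p_init M, c_init C) then 1 else 0)"
| "mc_dist M C (Suc n) y = (\<Sum>x\<in>UNIV. mc_dist M C n x * mc_kernel M C x y)"

definition H_MC :: "('s::finite, 'a::finite, 'z::finite) pomdp \<Rightarrow> ('q::finite, 'a, 'z) fsc \<Rightarrow> nat \<Rightarrow> real" where
  "H_MC M C t = cond_ent (\<lambda>x y. mc_dist M C (t - 2) x * mc_kernel M C x y) UNIV UNIV"

end

theory Submission
  imports Defs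
begin

lemma finite_lists_len: "finite (lists_len m :: 'x::finite list set)"
  using finite_lists_length_eq[of "UNIV :: 'x set" m] by (simp add: lists_len_def)

lemma lists_len_Suc: "lists_len (Suc m) = (\<lambda>(xs,x). xs@[x]) ` (lists_len m \<times> UNIV)"
proof
  show "lists_len (Suc m) \<subseteq> (\<lambda>(xs,x). xs@[x]) ` (lists_len m \<times> UNIV)"
  proof
    fix ys assume "ys \<in> lists_len (Suc m)"
    then have l: "length ys = Suc m" by (simp add: lists_len_def)
    then have "ys \<noteq> []" by auto
    then have "ys = butlast ys @ [last ys]" by simp
    moreover have "butlast ys \<in> lists_len m" using l by (simp add: lists_len_def)
    ultimately show "ys \<in> (\<lambda>(xs,x). xs@[x]) ` (lists_len m \<times> UNIV)"
      by (intro image_eqI[where x="(butlast ys, last ys)"]) auto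
  qed
qed (auto simp: lists_len_def)

lemma sum_lists_Suc:
  fixes F :: "'x::finite list \<Rightarrow> real"
  shows "(\<Sum>ys\<in>lists_len (Suc m). F ys) = (\<Sum>xs\<in>lists_len m. \<Sum>x\<in>UNIV. F (xs@[x]))"
proof -
  have inj: "inj_on (\<lambda>(xs,x). xs@[x]) (lists_len m \<times> (UNIV :: 'x set))"
    by (auto simp: inj_on_def)
  have "(\<Sum>ys\<in>lists_len (Suc m). F ys) = (\<Sum>p\<in>lists_len m \<times> UNIV. F ((\<lambda>(xs,x). xs@[x]) p))"
    unfolding lists_len_Suc by (simp add: sum.reindex[OF inj] comp_def)
  also have "\<dots> = (\<Sum>xs\<in>lists_len m. \<Sum>x\<in>UNIV. F (xs@[x]))"
    by (simp add: sum.cartesian_product case_prod_beta)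
  finally show ?thesis .
qed

lemma sum_lists_prod:
  fixes h :: "nat \<Rightarrow> 'x::finite \<Rightarrow> real"
  shows "(\<Sum>xs\<in>lists_len m. \<Prod>i<m. h i (xs!i)) = (\<Prod>i<m. \<Sum>x\<in>UNIV. h i x)"
proof (induction m)
  case 0
  have "lists_len 0 = {[] :: 'x list}" by (auto simp: lists_len_def)
  then show ?case by simp
next
  case (Suc m)
  have "(\<Sum>ys\<in>lists_len (Suc m). \<Prod>i<Suc m. h i (ys!i))
      = (\<Sum>xs\<in>lists_len m. \<Sum>x\<in>UNIV. \<Prod>i<Suc m. h i ((xs@[x])!i))"
    by (rule sum_lists_Suc)
  also have "\<dots> = (\<Sum>xs\<in>lists_len m. \<Sum>x\<in>UNIV. (\<Prod>i<m. h i (xs!i)) * h m x)"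
  proof (rule sum.cong[OF refl], rule sum.cong[OF refl])
    fix xs :: "'x list" and x :: 'x assume "xs \<in> lists_len m"
    then have l: "length xs = m" by (simp add: lists_len_def)
    have "(\<Prod>i<Suc m. h i ((xs@[x])!i)) = (\<Prod>i<m. h i ((xs@[x])!i)) * h m x"
      by (subst prod.lessThan_Suc) (simp add: l[symmetric])
    also have "(\<Prod>i<m. h i ((xs@[x])!i)) = (\<Prod>i<m. h i (xs!i))"
      using l by (intro prod.cong) (auto simp: nth_append)
    finally show "(\<Prod>i<Suc m. h i ((xs@[x])!i)) = (\<Prod>i<m. h i (xs!i)) * h m x" .
  qed
  also have "\<dots> = (\<Sum>xs\<in>lists_len m. \<Prod>i<m. h i (xs!i)) * (\<Sum>x\<in>UNIV. h m x)"
    by (simp add: sum_distrib_left sum_distrib_right sum.swap[of _ "lists_len m"])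
  also have "\<dots> = (\<Prod>i<Suc m. \<Sum>x\<in>UNIV. h i x)" using Suc by simp
  finally show ?case .
qed

definition sig :: "('q, 'a, 'z) fsc \<Rightarrow> 'q \<Rightarrow> 'q" where
  "sig C q = the_elem (Succ C q)"

definition qseq :: "('q, 'a, 'z) fsc \<Rightarrow> nat \<Rightarrow> 'q" where
  "qseq C n = (sig C ^^ n) (c_init C)"

lemma qseq_0: "qseq C 0 = c_init C" by (simp add: qseq_def)
lemma qseq_Suc: "qseq C (Suc n) = sig C (qseq C n)" by (simp add: qseq_def)

definition Kq :: "('s::finite, 'a::finite, 'z::finite) pomdp \<Rightarrow> ('q::finite, 'a, 'z) fsc \<Rightarrow> 'q \<Rightarrow> 's \<Rightarrow> 's \<Rightarrow> real" where
  "Kq M C q s s' = (\<Sum>a\<in>UNIV. \<Sum>z\<in>UNIV. p_obs M s z * p_trans M s a s' * c_dec C q z a)"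

fun mu :: "('s::finite, 'a::finite, 'z::finite) pomdp \<Rightarrow> ('q::finite, 'a, 'z) fsc \<Rightarrow> nat \<Rightarrow> 's \<Rightarrow> real" where
  "mu M C 0 s = (if s = p_init M then 1 else 0)"
| "mu M C (Suc n) s' = (\<Sum>s\<in>UNIV. mu M C n s * Kq M C (qseq C n) s s')"

lemma c_mem_det:
  fixes C :: "('q::finite, 'a::finite, 'z::finite) fsc"
  assumes F: "is_fsc C" and D: "deterministic_fsc C"
  shows "c_mem C q z a q' = (if q' = sig C q then 1 else 0)"
proof -
  from D have "card (Succ C q) = 1" by (simp add: deterministic_fsc_def)
  then obtain b where b: "Succ C q = {b}" by (rule card_1_singletonE)
  then have sb: "sig C q = b" by (simp add: sig_def)
  have nn: "\<And>r. c_mem C q z a r \<ge> 0" using F by (simp add: is_fsc_def)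
  have zero: "c_mem C q z a r = 0" if "r \<noteq> b" for r
  proof -
    have "r \<notin> Succ C q" using b that by auto
    then have "\<not> c_mem C q z a r > 0" by (auto simp: Succ_def)
    with nn[of r] show ?thesis by linarith
  qed
  have "1 = (\<Sum>r\<in>UNIV. c_mem C q z a r)" using F by (simp add: is_fsc_def)
  also have "\<dots> = c_mem C q z a b + (\<Sum>r\<in>UNIV - {b}. c_mem C q z a r)"
    by (simp add: sum.remove)
  also have "(\<Sum>r\<in>UNIV - {b}. c_mem C q z a r) = 0"
    by (intro sum.neutral) (auto simp: zero)
  finally have "c_mem C q z a b = 1" by simp
  then show ?thesis using zero sb by auto
qed

lemma Kq_sum:
  assumes P: "is_pomdp M" and F: "is_fsc C"
  shows "(\<Sum>s'\<in>UNIV. Kq M C q s s') = 1"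
proof -
  have "(\<Sum>s'\<in>UNIV. Kq M C q s s') = (\<Sum>a\<in>UNIV. \<Sum>s'\<in>UNIV. \<Sum>z\<in>UNIV. p_obs M s z * p_trans M s a s' * c_dec C q z a)"
    unfolding Kq_def by (rule sum.swap)
  also have "\<dots> = (\<Sum>a\<in>UNIV. \<Sum>z\<in>UNIV. \<Sum>s'\<in>UNIV. p_obs M s z * p_trans M s a s' * c_dec C q z a)"
    by (intro sum.cong refl sum.swap)
  also have "\<dots> = (\<Sum>a\<in>UNIV. \<Sum>z\<in>UNIV. p_obs M s z * c_dec C q z a * (\<Sum>s'\<in>UNIV. p_trans M s a s'))"
    by (intro sum.cong refl) (simp add: sum_distrib_left sum_distrib_right mult_ac)
  also have "\<dots> = (\<Sum>a\<in>UNIV. \<Sum>z\<in>UNIV. p_obs M s z * c_dec C q z a)"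
    using P by (simp add: is_pomdp_def)
  also have "\<dots> = (\<Sum>z\<in>UNIV. \<Sum>a\<in>UNIV. p_obs M s z * c_dec C q z a)"
    by (rule sum.swap)
  also have "\<dots> = (\<Sum>z\<in>UNIV. p_obs M s z * (\<Sum>a\<in>UNIV. c_dec C q z a))"
    by (simp add: sum_distrib_left)
  also have "\<dots> = 1" using P F by (simp add: is_pomdp_def is_fsc_def)
  finally show ?thesis .
qed

lemma ssp_closed:
  fixes M :: "('s::finite, 'a::finite, 'z::finite) pomdp"
    and C :: "('q::finite, 'a, 'z) fsc"
  assumes P: "is_pomdp M" and F: "is_fsc C" and D: "deterministic_fsc C"
    and len: "length ss = Suc n"
  shows "state_seq_prob M C (Suc n) ss =
    (if ss!0 = p_init M then \<Prod>i<n. Kq M C (qseq C i) (ss!i) (ss!(i+1)) else 0)"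
proof (cases "ss!0 = p_init M")
  case False
  then show ?thesis by (simp add: state_seq_prob_def)
next
  case True
  define g where "g = (\<lambda>qs zs as. (\<Prod>i<n. p_obs M (ss ! i) (zs ! i) * c_dec C (qs ! i) (zs ! i) (as ! i)
                        * p_trans M (ss ! i) (as ! i) (ss ! (i + 1))
                        * c_mem C (qs ! i) (zs ! i) (as ! i) (qs ! (i + 1))))"
  define G where "G = (\<lambda>qs. \<Sum>zs\<in>lists_len n. \<Sum>as\<in>lists_len n.
     (if ss ! 0 = p_init M \<and> qs ! 0 = c_init C then g qs zs as else (0::real)))"
  define ql where "ql = map (qseq C) [0..<Suc n]"
  have ssp: "state_seq_prob M C (Suc n) ss = (\<Sum>qs\<in>lists_len (Suc n). G qs)"
    unfolding state_seq_prob_def G_def g_def by (simp only: diff_Suc_1)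
  have Gz: "G qs = 0" if qsl: "qs \<in> lists_len (Suc n)" and ne: "qs \<noteq> ql" for qs
  proof (cases "qs ! 0 = c_init C")
    case False
    then show ?thesis by (simp add: G_def)
  next
    case q0: True
    have "\<exists>i<n. qs ! Suc i \<noteq> sig C (qs ! i)"
    proof (rule ccontr)
      assume "\<not> ?thesis"
      then have st: "\<And>i. i < n \<Longrightarrow> qs ! Suc i = sig C (qs ! i)" by auto
      have "i < Suc n \<longrightarrow> qs ! i = qseq C i" for i
        by (induction i) (auto simp: q0 qseq_0 qseq_Suc st)
      then have "qs = ql" using qsl by (intro nth_equalityI) (auto simp: ql_def lists_len_def simp del: upt_Suc)
      with ne show False by simp
    qed
    then obtain i where i: "i < n" "qs ! Suc i \<noteq> sig C (qs ! i)" by auto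
    have gz: "g qs zs as = 0" for zs as
      unfolding g_def
      by (rule prod_zero) (use i in \<open>auto simp: c_mem_det[OF F D]\<close>)
    show ?thesis unfolding G_def by (intro sum.neutral ballI) (simp only: gz if_cancel)
  qed
  have qll: "ql \<in> lists_len (Suc n)" by (simp add: ql_def lists_len_def)
  have "(\<Sum>qs\<in>lists_len (Suc n). G qs) = G ql + (\<Sum>qs\<in>lists_len (Suc n) - {ql}. G qs)"
    by (rule sum.remove[OF finite_lists_len qll])
  also have "(\<Sum>qs\<in>lists_len (Suc n) - {ql}. G qs) = 0"
    by (intro sum.neutral) (auto simp: Gz)
  finally have s1: "state_seq_prob M C (Suc n) ss = G ql" using ssp by simp
  define h where "h = (\<lambda>i z a. p_obs M (ss ! i) z * c_dec C (qseq C i) z a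
                        * p_trans M (ss ! i) a (ss ! (i + 1)))"
  have qli: "ql ! i = qseq C i" if "i < Suc n" for i
    using that by (simp add: ql_def del: upt_Suc)
  have "G ql = (\<Sum>zs\<in>lists_len n. \<Sum>as\<in>lists_len n. \<Prod>i<n. h i (zs!i) (as!i))"
    unfolding G_def g_def h_def
    by (intro sum.cong refl prod.cong)
       (auto simp: True qli qseq_0 c_mem_det[OF F D] qseq_Suc[symmetric])
  also have "\<dots> = (\<Sum>zs\<in>lists_len n. \<Prod>i<n. \<Sum>a\<in>UNIV. h i (zs!i) a)"
    by (intro sum.cong refl) (rule sum_lists_prod)
  also have "\<dots> = (\<Prod>i<n. \<Sum>z\<in>UNIV. \<Sum>a\<in>UNIV. h i z a)"
    by (rule sum_lists_prod)
  also have "\<dots> = (\<Prod>i<n. Kq M C (qseq C i) (ss!i) (ss!(i+1)))"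
    unfolding Kq_def h_def
    by (intro prod.cong refl, subst sum.swap) (simp add: mult_ac)
  finally show ?thesis using s1 True by simp
qed

lemma ssp_rec:
  fixes M :: "('s::finite, 'a::finite, 'z::finite) pomdp"
    and C :: "('q::finite, 'a, 'z) fsc"
  assumes P: "is_pomdp M" and F: "is_fsc C" and D: "deterministic_fsc C"
    and len: "length xs = Suc n"
  shows "state_seq_prob M C (Suc (Suc n)) (xs @ [x]) =
         state_seq_prob M C (Suc n) xs * Kq M C (qseq C n) (last xs) x"
proof -
  have l2: "length (xs @ [x]) = Suc (Suc n)" using len by simp
  have h0: "(xs @ [x]) ! 0 = xs ! 0" using len by (simp add: nth_append)
  have lx: "last xs = xs ! n" using len by (subst last_conv_nth) auto
  have "(\<Prod>i<Suc n. Kq M C (qseq C i) ((xs @ [x]) ! i) ((xs @ [x]) ! (i + 1)))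
      = (\<Prod>i<n. Kq M C (qseq C i) ((xs @ [x]) ! i) ((xs @ [x]) ! (i + 1))) * Kq M C (qseq C n) (xs ! n) x"
    using len by (simp add: nth_append)
  also have "(\<Prod>i<n. Kq M C (qseq C i) ((xs @ [x]) ! i) ((xs @ [x]) ! (i + 1)))
      = (\<Prod>i<n. Kq M C (qseq C i) (xs ! i) (xs ! (i + 1)))"
    using len by (intro prod.cong refl) (simp add: nth_append)
  finally show ?thesis
    unfolding ssp_closed[OF P F D l2] ssp_closed[OF P F D len] h0 lx by simp
qed

lemma ssp_base:
  fixes M :: "('s::finite, 'a::finite, 'z::finite) pomdp"
    and C :: "('q::finite, 'a, 'z) fsc"
  assumes P: "is_pomdp M" and F: "is_fsc C" and D: "deterministic_fsc C"
  shows "state_seq_prob M C (Suc 0) [s] = (if s = p_init M then 1 else 0)"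
  using ssp_closed[OF P F D, of "[s]" 0] by simp

lemma marginal:
  fixes M :: "('s::finite, 'a::finite, 'z::finite) pomdp"
    and C :: "('q::finite, 'a, 'z) fsc"
  assumes P: "is_pomdp M" and F: "is_fsc C" and D: "deterministic_fsc C"
  shows "(\<Sum>ss\<in>lists_len (Suc n). state_seq_prob M C (Suc n) ss * g (last ss))
       = (\<Sum>s\<in>UNIV. mu M C n s * g s)"
proof (induction n arbitrary: g)
  case 0
  have "(\<Sum>ss\<in>lists_len (Suc 0). state_seq_prob M C (Suc 0) ss * g (last ss))
      = (\<Sum>s\<in>UNIV. state_seq_prob M C (Suc 0) [s] * g s)"
  proof -
    have "lists_len 0 = {[] :: 's list}" by (auto simp: lists_len_def)
    then show ?thesis by (simp add: sum_lists_Suc)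
  qed
  then show ?case by (simp add: ssp_base[OF P F D])
next
  case (Suc n)
  have "(\<Sum>ss\<in>lists_len (Suc (Suc n)). state_seq_prob M C (Suc (Suc n)) ss * g (last ss))
      = (\<Sum>xs\<in>lists_len (Suc n). \<Sum>x\<in>UNIV. state_seq_prob M C (Suc (Suc n)) (xs@[x]) * g x)"
    by (simp add: sum_lists_Suc)
  also have "\<dots> = (\<Sum>xs\<in>lists_len (Suc n). state_seq_prob M C (Suc n) xs *
        (\<lambda>y. \<Sum>x\<in>UNIV. Kq M C (qseq C n) y x * g x) (last xs))"
    by (intro sum.cong refl)
       (simp add: ssp_rec[OF P F D] lists_len_def sum_distrib_left mult.assoc)
  also have "\<dots> = (\<Sum>y\<in>UNIV. mu M C n y * (\<Sum>x\<in>UNIV. Kq M C (qseq C n) y x * g x))"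
    by (rule Suc.IH)
  also have "\<dots> = (\<Sum>y\<in>UNIV. \<Sum>x\<in>UNIV. mu M C n y * (Kq M C (qseq C n) y x * g x))"
    by (simp only: sum_distrib_left)
  also have "\<dots> = (\<Sum>x\<in>UNIV. \<Sum>y\<in>UNIV. mu M C n y * (Kq M C (qseq C n) y x * g x))"
    by (rule sum.swap)
  also have "\<dots> = (\<Sum>x\<in>UNIV. (\<Sum>y\<in>UNIV. mu M C n y * Kq M C (qseq C n) y x) * g x)"
    by (simp only: sum_distrib_right mult.assoc)
  also have "\<dots> = (\<Sum>x\<in>UNIV. mu M C (Suc n) x * g x)"
    by simp
  finally show ?case .
qed

lemma cond_ent_factor:
  assumes k1: "\<And>x. x \<in> X \<Longrightarrow> (\<Sum>y\<in>Y. k x y) = 1"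
    and f: "\<And>x y. x \<in> X \<Longrightarrow> f x y = c x * k x y"
  shows "cond_ent f X Y = - (\<Sum>x\<in>X. \<Sum>y\<in>Y. c x * k x y * log 2 (k x y))"
  unfolding cond_ent_def
proof (intro arg_cong[where f=uminus] sum.cong refl)
  fix x y assume x: "x \<in> X"
  have s: "(\<Sum>y'\<in>Y. f x y') = c x"
    using f[OF x] k1[OF x] by (simp add: sum_distrib_left[symmetric])
  show "(if f x y = 0 then 0 else f x y * log 2 (f x y / (\<Sum>y'\<in>Y. f x y'))) =
        c x * k x y * log 2 (k x y)"
    using f[OF x, of y] s by auto
qed

lemma sum_UNIV_pair:
  fixes f :: "'s::finite \<times> 'q::finite \<Rightarrow> real"
  shows "(\<Sum>x\<in>UNIV. f x) = (\<Sum>s\<in>UNIV. \<Sum>q\<in>UNIV. f (s,q))"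
  by (simp add: UNIV_Times_UNIV[symmetric] sum.cartesian_product del: UNIV_Times_UNIV)

lemma kernel_det:
  fixes M :: "('s::finite, 'a::finite, 'z::finite) pomdp"
    and C :: "('q::finite, 'a, 'z) fsc"
  assumes F: "is_fsc C" and D: "deterministic_fsc C"
  shows "mc_kernel M C (s,q) (s',q') = (if q' = sig C q then Kq M C q s s' else 0)"
  by (cases "q' = sig C q") (simp_all add: mc_kernel_def Kq_def c_mem_det[OF F D])

lemma kernel_sum:
  fixes M :: "('s::finite, 'a::finite, 'z::finite) pomdp"
    and C :: "('q::finite, 'a, 'z) fsc"
  assumes P: "is_pomdp M" and F: "is_fsc C" and D: "deterministic_fsc C"
  shows "(\<Sum>y\<in>UNIV. mc_kernel M C x y) = 1"
proof -
  obtain s q where x: "x = (s,q)" by (cases x)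
  have "(\<Sum>y\<in>UNIV. mc_kernel M C x y) = (\<Sum>s'\<in>UNIV. \<Sum>q'\<in>UNIV. mc_kernel M C (s,q) (s',q'))"
    by (simp add: x sum_UNIV_pair)
  also have "\<dots> = (\<Sum>s'\<in>UNIV. Kq M C q s s')"
    by (simp add: kernel_det[OF F D])
  also have "\<dots> = 1" by (rule Kq_sum[OF P F])
  finally show ?thesis .
qed

lemma mc_dist_det:
  fixes M :: "('s::finite, 'a::finite, 'z::finite) pomdp"
    and C :: "('q::finite, 'a, 'z) fsc"
  assumes F: "is_fsc C" and D: "deterministic_fsc C"
  shows "mc_dist M C n (s,q) = (if q = qseq C n then mu M C n s else 0)"
proof (induction n arbitrary: s q)
  case 0
  then show ?case by (auto simp: qseq_0)
next
  case (Suc n)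
  have "mc_dist M C (Suc n) (s,q) = (\<Sum>s0\<in>UNIV. \<Sum>q0\<in>UNIV. mc_dist M C n (s0,q0) * mc_kernel M C (s0,q0) (s,q))"
    by (simp add: sum_UNIV_pair)
  also have "\<dots> = (\<Sum>s0\<in>UNIV. \<Sum>q0\<in>UNIV. if q0 = qseq C n then mu M C n s0 * mc_kernel M C (s0,q0) (s,q) else 0)"
    by (intro sum.cong refl) (simp add: Suc.IH)
  also have "\<dots> = (\<Sum>s0\<in>UNIV. mu M C n s0 * mc_kernel M C (s0,qseq C n) (s,q))"
    by (simp add: sum.delta)
  also have "\<dots> = (if q = qseq C (Suc n) then mu M C (Suc n) s else 0)"
    by (simp add: kernel_det[OF F D] qseq_Suc)
  finally show ?case .
qed

theorem proposition1:
  fixes M :: "('s::finite, 'a::finite, 'z::finite) pomdp"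
    and C :: "('q::finite, 'a, 'z) fsc"
    and k t :: nat
  assumes "is_pomdp M"
    and "is_fsc C"
    and "card (UNIV :: 'q set) = k"
    and "deterministic_fsc C"
    and "t \<ge> 2"
  shows "H_C M C t = H_MC M C t"
proof -
  note P = assms(1) and F = assms(2) and D = assms(4)
  obtain n where tn: "t = Suc (Suc n)" using assms(5) by (metis add_2_eq_Suc le_Suc_ex)
  define K where "K = Kq M C (qseq C n)"
  define phi where "phi = (\<lambda>y. \<Sum>s\<in>UNIV. K y s * log 2 (K y s))"
  have "H_C M C t = cond_ent (\<lambda>ss s. state_seq_prob M C (Suc (Suc n)) (ss @ [s])) (lists_len (Suc n)) UNIV"
    by (simp add: H_C_def tn)
  also have "\<dots> = - (\<Sum>ss\<in>lists_len (Suc n). \<Sum>s\<in>UNIV.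
       state_seq_prob M C (Suc n) ss * K (last ss) s * log 2 (K (last ss) s))"
    by (rule cond_ent_factor) (simp_all add: K_def Kq_sum[OF P F] ssp_rec[OF P F D] lists_len_def)
  also have "\<dots> = - (\<Sum>ss\<in>lists_len (Suc n). state_seq_prob M C (Suc n) ss * phi (last ss))"
    by (simp add: phi_def sum_distrib_left mult.assoc)
  also have "\<dots> = - (\<Sum>y\<in>UNIV. mu M C n y * phi y)"
    by (simp add: marginal[OF P F D])
  finally have hc: "H_C M C t = - (\<Sum>y\<in>UNIV. mu M C n y * phi y)" .
  have "H_MC M C t = cond_ent (\<lambda>x y. mc_dist M C n x * mc_kernel M C x y) UNIV UNIV"
    by (simp add: H_MC_def tn)
  also have "\<dots> = - (\<Sum>x\<in>UNIV. \<Sum>y\<in>UNIV. mc_dist M C n x * mc_kernel M C x y * log 2 (mc_kernel M C x y))"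
    by (rule cond_ent_factor) (simp_all add: kernel_sum[OF P F D])
  also have "(\<Sum>x\<in>UNIV. \<Sum>y\<in>UNIV. mc_dist M C n x * mc_kernel M C x y * log 2 (mc_kernel M C x y))
      = (\<Sum>y\<in>UNIV. mu M C n y * phi y)"
  proof -
    have inner: "(\<Sum>y\<in>UNIV. mc_dist M C n (s,q) * mc_kernel M C (s,q) y * log 2 (mc_kernel M C (s,q) y))
       = (if q = qseq C n then mu M C n s * phi s else 0)" for s q
    proof (cases "q = qseq C n")
      case True
      have "(\<Sum>y\<in>UNIV. mc_dist M C n (s,q) * mc_kernel M C (s,q) y * log 2 (mc_kernel M C (s,q) y))
          = (\<Sum>s'\<in>UNIV. \<Sum>q'\<in>UNIV. mu M C n s * (if q' = sig C q then K s s' * log 2 (K s s') else 0))"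
        by (subst sum_UNIV_pair) (intro sum.cong refl,
            simp add: mc_dist_det[OF F D] kernel_det[OF F D] True K_def)
      also have "\<dots> = mu M C n s * phi s"
        by (simp only: sum_distrib_left[symmetric]) (simp add: phi_def)
      finally show ?thesis using True by simp
    next
      case False
      then show ?thesis by (simp add: mc_dist_det[OF F D])
    qed
    show ?thesis
      by (subst sum_UNIV_pair) (simp add: inner sum.delta')
  qed
  finally show ?thesis using hc by simp
qed

end
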